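(* Let $Q$ be a Boolean CQ as below with query graph $G$, let $I$ be an instance, let $R\in E^i$ and $v\in u_R^{+,R}\cap v_R^{\oplus}$. Let $P$ be a directed path from $u_R$ to $v$ whose first edge is $e_R$ and whose remaining part is a directed path from $v_R$ to $v$ consisting only of consistent edges. If there exist $(a,b_1),(a,b_2)\in\Pi_{u_R,v}(P^f(I))$ with $b_1\ne b_2$, then for no frugal repair $r$ of $I$ for $Q$ is there a tuple $t\in Q^f(r)$ with $t[u_R]=a$.
   Context: $Q$ is a Boolean conjunctive query without self-joins with atoms $R(u,v)$, $u\neq v$ variables, first attribute the key; relations are of consistent or inconsistent type. Query graph $G$: vertices are variables, one edge $e_R=(u_R,v_R)$ per atom, $E^i$ the inconsistent edges. $x\to y$: directed path (possibly empty) with only consistent edges; $u^{\oplus}=\{v:u\to v\}$; $u^{+,R}$ is the set of vertices reachable from $u$ by a directed path in $G$ with the edge $e_R$ removed. For a path $P$ (a set of atoms of $Q$), $P^f(I)$ is the set of satisfying valuations of the variables of $P$ in $I$, and $\Pi_{u_R,v}$ projects onto the variables $u_R,v$. A repair is a maximal subset of $I$ satisfying all key constraints; $Q^f(r)$ is the set of satisfying valuations of $Q$ in $r$, with $t[x]$ the value of variable $x$; a repair $r$ is frugal if no repair $r'$ has $Q^f(r')\subsetneq Q^f(r)$. *)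

theory Defs
  imports Main
begin

text \<open>A query is described by a finite set of relation names Q (no self-joins, so atoms
are identified with relation names), together with the key variable ku R (= u_R), the
non-key variable kv R (= v_R) of the atom R(u_R, v_R), and a predicate cons telling
whether a relation is of consistent type. Facts are triples (R, a, b) standing for R(a,b),
the first attribute being the key.\<close>

type_synonym ('r, 'c) fact = "'r \<times> 'c \<times> 'c"

definition wf_query :: "'r set \<Rightarrow> ('r \<Rightarrow> 'v) \<Rightarrow> ('r \<Rightarrow> 'v) \<Rightarrow> bool" where
  "wf_query Q ku kv \<longleftrightarrow> finite Q \<and> (\<forall>R\<in>Q. ku R \<noteq> kv R)"

definition key_ok_rel :: "'r \<Rightarrow> ('r, 'c) fact set \<Rightarrow> bool" where
  "key_ok_rel R r \<longleftrightarrow> (\<forall>a b b'. (R, a, b) \<in> r \<and> (R, a, b') \<in> r \<longrightarrow> b = b')"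

definition key_ok :: "('r, 'c) fact set \<Rightarrow> bool" where
  "key_ok r \<longleftrightarrow> (\<forall>R. key_ok_rel R r)"

definition valid_instance :: "('r \<Rightarrow> bool) \<Rightarrow> ('r, 'c) fact set \<Rightarrow> bool" where
  "valid_instance cons I \<longleftrightarrow> finite I \<and> (\<forall>R. cons R \<longrightarrow> key_ok_rel R I)"

definition is_repair :: "('r, 'c) fact set \<Rightarrow> ('r, 'c) fact set \<Rightarrow> bool" where
  "is_repair I r \<longleftrightarrow> r \<subseteq> I \<and> key_ok r \<and>
     (\<forall>r'. r \<subseteq> r' \<and> r' \<subseteq> I \<and> key_ok r' \<longrightarrow> r' = r)"

definition vars :: "'r set \<Rightarrow> ('r \<Rightarrow> 'v) \<Rightarrow> ('r \<Rightarrow> 'v) \<Rightarrow> 'v set" where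
  "vars A ku kv = ku ` A \<union> kv ` A"

definition sat_vals :: "'r set \<Rightarrow> ('r \<Rightarrow> 'v) \<Rightarrow> ('r \<Rightarrow> 'v) \<Rightarrow> ('r, 'c) fact set \<Rightarrow> ('v \<Rightarrow> 'c) set" where
  "sat_vals A ku kv I = {t. (\<forall>S\<in>A. (S, t (ku S), t (kv S)) \<in> I) \<and>
                           (\<forall>x. x \<notin> vars A ku kv \<longrightarrow> t x = undefined)}"

definition proj2 :: "'v \<Rightarrow> 'v \<Rightarrow> ('v \<Rightarrow> 'c) set \<Rightarrow> ('c \<times> 'c) set" where
  "proj2 x y T = (\<lambda>t. (t x, t y)) ` T"

definition frugal_repair :: "'r set \<Rightarrow> ('r \<Rightarrow> 'v) \<Rightarrow> ('r \<Rightarrow> 'v) \<Rightarrow> ('r, 'c) fact set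
    \<Rightarrow> ('r, 'c) fact set \<Rightarrow> bool" where
  "frugal_repair Q ku kv I r \<longleftrightarrow> is_repair I r \<and>
     \<not> (\<exists>r'. is_repair I r' \<and> sat_vals Q ku kv r' \<subset> sat_vals Q ku kv r)"

definition edges :: "'r set \<Rightarrow> ('r \<Rightarrow> 'v) \<Rightarrow> ('r \<Rightarrow> 'v) \<Rightarrow> ('v \<times> 'v) set" where
  "edges A ku kv = (\<lambda>S. (ku S, kv S)) ` A"

definition cons_reach :: "'r set \<Rightarrow> ('r \<Rightarrow> 'v) \<Rightarrow> ('r \<Rightarrow> 'v) \<Rightarrow> ('r \<Rightarrow> bool) \<Rightarrow> 'v \<Rightarrow> 'v \<Rightarrow> bool" where
  "cons_reach Q ku kv cons x y \<longleftrightarrow> (x, y) \<in> (edges {S\<in>Q. cons S} ku kv)\<^sup>*"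

definition reach_without :: "'r set \<Rightarrow> ('r \<Rightarrow> 'v) \<Rightarrow> ('r \<Rightarrow> 'v) \<Rightarrow> 'r \<Rightarrow> 'v \<Rightarrow> 'v set" where
  "reach_without Q ku kv R x = {y. (x, y) \<in> (edges (Q - {R}) ku kv)\<^sup>*}"

definition is_dpath :: "'r set \<Rightarrow> ('r \<Rightarrow> 'v) \<Rightarrow> ('r \<Rightarrow> 'v) \<Rightarrow> 'r list \<Rightarrow> 'v \<Rightarrow> 'v \<Rightarrow> bool" where
  "is_dpath Q ku kv Ps x y \<longleftrightarrow> Ps \<noteq> [] \<and> set Ps \<subseteq> Q \<and> distinct Ps \<and>
     ku (hd Ps) = x \<and> kv (last Ps) = y \<and>
     (\<forall>i. Suc i < length Ps \<longrightarrow> kv (Ps ! i) = ku (Ps ! Suc i))"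

end

theory Submission
  imports Defs
begin

lemma main_aux:
  assumes vi: "valid_instance cons I"
    and RQ: "R \<in> Q"
    and reach: "v \<in> reach_without Q ku kv R (ku R)"
    and dp: "is_dpath Q ku kv Ps (ku R) v"
    and hdR: "hd Ps = R"
    and cs: "\<forall>S\<in>set (tl Ps). cons S"
    and s: "s \<in> sat_vals (set Ps) ku kv I" and sa: "s (ku R) = a"
    and fr: "frugal_repair Q ku kv I r"
    and t: "t \<in> sat_vals Q ku kv r" and ta: "t (ku R) = a"
    and ne: "s v \<noteq> t v"
  shows False
proof -
  have rep: "is_repair I r" and nofr: "\<not> (\<exists>r'. is_repair I r' \<and> sat_vals Q ku kv r' \<subset> sat_vals Q ku kv r)"
    using fr unfolding frugal_repair_def by auto
  have rI: "r \<subseteq> I" and kr: "key_ok r" and maxr: "\<And>r'. r \<subseteq> r' \<Longrightarrow> r' \<subseteq> I \<Longrightarrow> key_ok r' \<Longrightarrow> r' = r"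
    using rep unfolding is_repair_def by auto
  have Psne: "Ps \<noteq> []" and PsQ: "set Ps \<subseteq> Q" and lastv: "kv (last Ps) = v"
    and chainP: "\<And>i. Suc i < length Ps \<Longrightarrow> kv (Ps ! i) = ku (Ps ! Suc i)"
    using dp unfolding is_dpath_def by auto
  have Rin: "R \<in> set Ps" using Psne hdR by auto
  have sI: "\<And>S. S \<in> set Ps \<Longrightarrow> (S, s (ku S), s (kv S)) \<in> I" using s unfolding sat_vals_def by auto
  define c' where "c' = s (kv R)"
  have cI: "(R, a, c') \<in> I" using sI[OF Rin] sa c'_def by simp
  have tr: "\<And>S. S \<in> Q \<Longrightarrow> (S, t (ku S), t (kv S)) \<in> r" using t unfolding sat_vals_def by auto
  define c where "c = t (kv R)"
  have cr: "(R, a, c) \<in> r" using tr[OF RQ] ta c_def by simp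
  define r' where "r' = {f \<in> r. \<not>(fst f = R \<and> fst (snd f) = a)} \<union> {(R,a,c')}"
  have r'I: "r' \<subseteq> I" using rI cI unfolding r'_def by auto
  have kr': "key_ok r'"
    using kr unfolding key_ok_def key_ok_rel_def r'_def by auto
  have Ra: "(R, a, x) \<in> r' \<Longrightarrow> x = c'" for x unfolding r'_def by auto
  have other: "(S, y, z) \<in> r' \<Longrightarrow> S \<noteq> R \<Longrightarrow> (S, y, z) \<in> r" for S y z unfolding r'_def by auto
  have noa: False if t': "t' \<in> sat_vals Q ku kv r'" and t'a: "t' (ku R) = a" for t'
  proof -
    have t'r: "\<And>S. S \<in> Q \<Longrightarrow> (S, t' (ku S), t' (kv S)) \<in> r'" using t' unfolding sat_vals_def by auto
    have pth: "(ku R, y) \<in> (edges (Q - {R}) ku kv)\<^sup>* \<Longrightarrow> t' y = t y" for y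
    proof (induction rule: rtrancl_induct)
      case base then show ?case using t'a ta by simp
    next
      case (step y z)
      then obtain S where S: "S \<in> Q" "S \<noteq> R" "y = ku S" "z = kv S"
        unfolding edges_def by auto
      have "(S, t' (ku S), t' (kv S)) \<in> r" using other[OF t'r[OF S(1)] S(2)] .
      moreover have "(S, t (ku S), t (kv S)) \<in> r" using tr[OF S(1)] .
      ultimately show ?case using kr step S unfolding key_ok_def key_ok_rel_def by metis
    qed
    have tv: "t' v = t v" using pth reach unfolding reach_without_def by auto
    have ch: "i < length Ps \<Longrightarrow> t' (kv (Ps ! i)) = s (kv (Ps ! i))" for i
    proof (induction i)
      case 0
      have "Ps ! 0 = R" using hdR Psne by (simp add: hd_conv_nth)
      moreover have "t' (kv R) = c'" using Ra t'r[OF RQ] t'a by simp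
      ultimately show ?case using c'_def by simp
    next
      case (Suc i)
      define S where "S = Ps ! Suc i"
      have SinT: "S \<in> set (tl Ps)" using Suc.prems unfolding S_def
        by (metis Suc_less_eq length_Cons list.collapse Psne nth_Cons_Suc nth_mem)
      hence consS: "cons S" using cs by auto
      have SP: "S \<in> set Ps" using SinT by (meson list.set_sel(2) Psne)
      have kuS: "ku S = kv (Ps ! i)" using chainP Suc.prems S_def by simp
      have e1: "t' (ku S) = s (ku S)" using Suc kuS by simp
      have f1: "(S, t' (ku S), t' (kv S)) \<in> I" using t'r[OF subsetD[OF PsQ SP]] r'I by auto
      have f2: "(S, s (ku S), s (kv S)) \<in> I" using sI[OF SP] .
      have "key_ok_rel S I" using vi consS unfolding valid_instance_def by auto
      then show ?case using f1 f2 e1 unfolding key_ok_rel_def S_def by metis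
    qed
    have "t' v = s v"
      using ch[of "length Ps - 1"] Psne lastv by (simp add: last_conv_nth)
    thus False using tv ne by simp
  qed
  have sub: "sat_vals Q ku kv r' \<subseteq> sat_vals Q ku kv r"
  proof
    fix t' assume t': "t' \<in> sat_vals Q ku kv r'"
    have na: "t' (ku R) \<noteq> a" using noa t' by blast
    have "\<forall>S\<in>Q. (S, t' (ku S), t' (kv S)) \<in> r"
    proof
      fix S assume "S \<in> Q"
      hence "(S, t' (ku S), t' (kv S)) \<in> r'" using t' unfolding sat_vals_def by auto
      thus "(S, t' (ku S), t' (kv S)) \<in> r" using na unfolding r'_def by auto
    qed
    thus "t' \<in> sat_vals Q ku kv r" using t' unfolding sat_vals_def by auto
  qed
  have tn: "t \<notin> sat_vals Q ku kv r'" using noa ta by blast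
  have rep': "is_repair I r'"
    unfolding is_repair_def
  proof (intro conjI allI impI)
    show "r' \<subseteq> I" by (rule r'I)
    show "key_ok r'" by (rule kr')
    fix r'' assume h: "r' \<subseteq> r'' \<and> r'' \<subseteq> I \<and> key_ok r''"
    define r3 where "r3 = (r'' - {(R,a,c')}) \<union> {(R,a,c)}"
    have c'r'': "(R,a,c') \<in> r''" using h unfolding r'_def by auto
    have R''a: "(R,a,x) \<in> r'' \<Longrightarrow> x = c'" for x
      using h c'r'' unfolding key_ok_def key_ok_rel_def by blast
    have "r \<subseteq> r3"
    proof
      fix f assume f: "f \<in> r"
      show "f \<in> r3"
      proof (cases "fst f = R \<and> fst (snd f) = a")
        case True
        then obtain x where fx: "f = (R,a,x)" by (cases f) auto
        then have "x = c" using kr cr f unfolding key_ok_def key_ok_rel_def by blast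
        then show ?thesis using fx unfolding r3_def by auto
      next
        case False
        then have "f \<in> r'" using f unfolding r'_def by auto
        then show ?thesis using h False unfolding r3_def by auto
      qed
    qed
    moreover have "r3 \<subseteq> I" using h rI cr unfolding r3_def by auto
    moreover have "key_ok r3"
      using h R''a unfolding r3_def key_ok_def key_ok_rel_def by auto
    ultimately have r3r: "r3 = r" using maxr by blast
    show "r'' = r'"
    proof
      show "r' \<subseteq> r''" using h by simp
      show "r'' \<subseteq> r'"
      proof
        fix f assume f: "f \<in> r''"
        show "f \<in> r'"
        proof (cases "fst f = R \<and> fst (snd f) = a")
          case True
          then obtain x where fx: "f = (R,a,x)" by (cases f) auto
          then show ?thesis using R''a f unfolding r'_def by auto
        next
          case False
          then have "f \<in> r3" using f unfolding r3_def by auto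
          then show ?thesis using r3r False unfolding r'_def by auto
        qed
      qed
    qed
  qed
  have "sat_vals Q ku kv r' \<subset> sat_vals Q ku kv r" using sub tn t by blast
  thus False using nofr rep' by blast
qed

theorem lemma5p8:
  fixes Q :: "'r set" and ku kv :: "'r \<Rightarrow> 'v" and cons :: "'r \<Rightarrow> bool"
    and I :: "('r, 'c) fact set" and R :: 'r and v :: 'v and Ps :: "'r list"
    and a b1 b2 :: 'c
  assumes "wf_query Q ku kv"
    and "valid_instance cons I"
    and "R \<in> Q" and "\<not> cons R"
    and "v \<in> reach_without Q ku kv R (ku R)"
    and "cons_reach Q ku kv cons (kv R) v"
    and "is_dpath Q ku kv Ps (ku R) v"
    and "hd Ps = R"
    and "\<forall>S\<in>set (tl Ps). cons S"
    and "(a, b1) \<in> proj2 (ku R) v (sat_vals (set Ps) ku kv I)"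
    and "(a, b2) \<in> proj2 (ku R) v (sat_vals (set Ps) ku kv I)"
    and "b1 \<noteq> b2"
  shows "\<not> (\<exists>r. frugal_repair Q ku kv I r \<and> (\<exists>t\<in>sat_vals Q ku kv r. t (ku R) = a))"
proof
  assume "\<exists>r. frugal_repair Q ku kv I r \<and> (\<exists>t\<in>sat_vals Q ku kv r. t (ku R) = a)"
  then obtain r t where fr: "frugal_repair Q ku kv I r" and t: "t \<in> sat_vals Q ku kv r"
    and ta: "t (ku R) = a" by blast
  obtain s1 where s1: "s1 \<in> sat_vals (set Ps) ku kv I" "s1 (ku R) = a" "s1 v = b1"
    using assms(10) unfolding proj2_def by auto
  obtain s2 where s2: "s2 \<in> sat_vals (set Ps) ku kv I" "s2 (ku R) = a" "s2 v = b2"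
    using assms(11) unfolding proj2_def by auto
  show False
  proof (cases "b1 = t v")
    case True
    then show False using main_aux[OF assms(2,3,5,7,8,9) s2(1,2) fr t ta] s2(3) assms(12) by simp
  next
    case False
    then show False using main_aux[OF assms(2,3,5,7,8,9) s1(1,2) fr t ta] s1(3) by simp
  qed
qed

end
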